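(* Let $\mathcal X\subseteq\mathbb R$ be an interval, $\omega\ge0$ a weight on $\mathcal X$, $Q(\phi)=\int_{\mathcal X}\phi(x)\omega(x)dx$, and $Q_N(\phi)=\sum_{i=0}^N\omega_{N,i}\phi(x_{N,i})$ with distinct nodes $x_{N,i}\in\mathcal X$ and real weights $\omega_{N,i}$. Assume $Q_N(\phi)=Q(\phi)$ for all $\phi\in P_{2N}$. Let $I_N$ be the interpolation operator onto $P_N$ at the nodes $x_{N,0},\dots,x_{N,N}$. Let $\phi_1,\phi_2$ be real continuous functions on $\mathcal X$ with $\phi_1,\phi_2\in L^2_\omega(\mathcal X)$ and $P_N\subset L^2_\omega(\mathcal X)$; set $\phi=\phi_1\phi_2$, $\psi_1=I_N\phi_1$, $\psi_2=I_N\phi_2$. Then $$|Q(\phi)-Q_N(\phi)|\le\bigl(\|\phi_1\|_\omega+\|\phi_2\|_\omega+\|\psi_1\|_\omega+\|\psi_2\|_\omega\bigr)\bigl(\|\phi_1-\psi_1\|_\omega+\|\phi_2-\psi_2\|_\omega\bigr).$$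
   Context: $P_K$ is the space of real polynomials of degree at most $K$; $\|f\|_\omega=(\int_{\mathcal X}|f|^2\omega)^{1/2}$. *)

theory Defs
  imports "HOL-Analysis.Analysis" "HOL-Computational_Algebra.Polynomial"
begin

definition wint :: "real set \<Rightarrow> (real \<Rightarrow> real) \<Rightarrow> (real \<Rightarrow> real) \<Rightarrow> real" where
  "wint X w f = (LINT t:X|lborel. f t * w t)"

definition wnorm :: "real set \<Rightarrow> (real \<Rightarrow> real) \<Rightarrow> (real \<Rightarrow> real) \<Rightarrow> real" where
  "wnorm X w f = sqrt (LINT t:X|lborel. (f t)^2 * w t)"

definition in_L2w :: "real set \<Rightarrow> (real \<Rightarrow> real) \<Rightarrow> (real \<Rightarrow> real) \<Rightarrow> bool" where
  "in_L2w X w f \<longleftrightarrow> set_borel_measurable lborel X f \<and> set_integrable lborel X (\<lambda>t. (f t)^2 * w t)"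

definition interp :: "(nat \<Rightarrow> real) \<Rightarrow> nat \<Rightarrow> (real \<Rightarrow> real) \<Rightarrow> real \<Rightarrow> real" where
  "interp x N f = poly (THE p. degree p \<le> N \<and> (\<forall>i\<le>N. poly p (x i) = f (x i)))"

end

theory Submission
  imports Defs
begin

lemma sbm_prod:
  fixes f g :: "real \<Rightarrow> real"
  assumes "set_borel_measurable lborel X f" "set_borel_measurable lborel X g"
  shows "set_borel_measurable lborel X (\<lambda>t. f t * g t)"
proof -
  have e: "(\<lambda>t. indicator X t *\<^sub>R (f t * g t)) = (\<lambda>t. (indicator X t *\<^sub>R f t) * (indicator X t *\<^sub>R g t :: real))"
    by (auto simp: indicator_def fun_eq_iff)
  show ?thesis unfolding set_borel_measurable_def e
    using assms unfolding set_borel_measurable_def by (intro borel_measurable_times)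
qed

lemma sbm_diff:
  fixes f g :: "real \<Rightarrow> real"
  assumes "set_borel_measurable lborel X f" "set_borel_measurable lborel X g"
  shows "set_borel_measurable lborel X (\<lambda>t. f t - g t :: real)"
proof -
  have e: "(\<lambda>t. indicator X t *\<^sub>R (f t - g t)) = (\<lambda>t. (indicator X t *\<^sub>R f t) - (indicator X t *\<^sub>R g t :: real))"
    by (auto simp: indicator_def fun_eq_iff)
  show ?thesis unfolding set_borel_measurable_def e
    using assms unfolding set_borel_measurable_def by (intro borel_measurable_diff)
qed

lemma L2_prod_int:
  fixes f g w :: "real \<Rightarrow> real"
  assumes wm: "set_borel_measurable lborel X w" and wn: "\<And>t. t \<in> X \<Longrightarrow> w t \<ge> 0"
    and f: "in_L2w X w f" and g: "in_L2w X w g"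
  shows "set_integrable lborel X (\<lambda>t. f t * g t * w t)"
proof (rule set_integrable_bound)
  show "set_integrable lborel X (\<lambda>t. ((f t)^2 * w t + (g t)^2 * w t) / 2)"
    using f g unfolding in_L2w_def by (intro set_integrable_divide set_integral_add) auto
  show "set_borel_measurable lborel X (\<lambda>t. f t * g t * w t)"
    using f g wm unfolding in_L2w_def by (intro sbm_prod) auto
  show "AE t in lborel. t \<in> X \<longrightarrow> norm (f t * g t * w t) \<le> norm (((f t)^2 * w t + (g t)^2 * w t) / 2)"
  proof (intro AE_I2 impI)
    fix t assume t: "t \<in> X"
    have w0: "w t \<ge> 0" using wn t .
    have "\<bar>f t * g t\<bar> \<le> ((f t)^2 + (g t)^2) / 2"
    proof -
      have "0 \<le> (\<bar>f t\<bar> - \<bar>g t\<bar>)^2" by simp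
      thus ?thesis by (simp add: power2_diff abs_mult)
    qed
    hence "\<bar>f t * g t\<bar> * w t \<le> ((f t)^2 + (g t)^2) / 2 * w t"
      using w0 by (rule mult_right_mono)
    thus "norm (f t * g t * w t) \<le> norm (((f t)^2 * w t + (g t)^2 * w t) / 2)"
      using w0 by (simp add: abs_mult algebra_simps)
  qed
qed

lemma L2_diff:
  fixes f g w :: "real \<Rightarrow> real"
  assumes wm: "set_borel_measurable lborel X w" and wn: "\<And>t. t \<in> X \<Longrightarrow> w t \<ge> 0"
    and f: "in_L2w X w f" and g: "in_L2w X w g"
  shows "in_L2w X w (\<lambda>t. f t - g t)"
proof -
  have i: "set_integrable lborel X (\<lambda>t. f t * g t * w t)" using L2_prod_int[OF wm wn f g] .
  have e: "(\<lambda>t. (f t - g t)^2 * w t) = (\<lambda>t. ((f t)^2 * w t + (g t)^2 * w t) - 2 * (f t * g t * w t))"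
    by (auto simp: fun_eq_iff power2_eq_square algebra_simps)
  show ?thesis unfolding in_L2w_def e
    using f g i unfolding in_L2w_def by (auto intro!: sbm_diff)
qed


lemma sint_nonneg:
  fixes h :: "real \<Rightarrow> real"
  assumes "\<And>t. t \<in> X \<Longrightarrow> 0 \<le> h t"
  shows "0 \<le> (LINT t:X|lborel. h t)"
  unfolding set_lebesgue_integral_def
  by (intro integral_nonneg_AE AE_I2) (auto simp: indicator_def assms)

lemma quad_disc:
  fixes A B C :: real
  assumes q: "\<And>s. 0 \<le> s^2 * A + 2 * s * C + B" and A: "A \<ge> 0"
  shows "C^2 \<le> A * B"
proof (cases "A = 0")
  case True
  show ?thesis
  proof (rule ccontr)
    assume "\<not> ?thesis"
    hence "C \<noteq> 0" using True by auto
    have "0 \<le> (-(B+1)/(2*C))^2 * A + 2 * (-(B+1)/(2*C)) * C + B" by (rule q)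
    also have "\<dots> = -1" using True \<open>C \<noteq> 0\<close> by (simp add: field_simps)
    finally show False by simp
  qed
next
  case False
  hence Ap: "A > 0" using A by simp
  have "0 \<le> (-C/A)^2 * A + 2 * (-C/A) * C + B" by (rule q)
  also have "\<dots> = B - C^2 / A" using Ap by (simp add: field_simps power2_eq_square)
  finally have "C^2 / A \<le> B" by simp
  thus ?thesis using Ap by (simp add: field_simps mult.commute)
qed

lemma CS:
  fixes f g w :: "real \<Rightarrow> real"
  assumes wm: "set_borel_measurable lborel X w" and wn: "\<And>t. t \<in> X \<Longrightarrow> w t \<ge> 0"
    and f: "in_L2w X w f" and g: "in_L2w X w g"
  shows "\<bar>LINT t:X|lborel. f t * g t * w t\<bar> \<le> wnorm X w f * wnorm X w g"
proof -
  define A where "A = (LINT t:X|lborel. f t * f t * w t)"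
  define B where "B = (LINT t:X|lborel. g t * g t * w t)"
  define C where "C = (LINT t:X|lborel. f t * g t * w t)"
  have iA: "set_integrable lborel X (\<lambda>t. f t * f t * w t)" using L2_prod_int[OF wm wn f f] .
  have iB: "set_integrable lborel X (\<lambda>t. g t * g t * w t)" using L2_prod_int[OF wm wn g g] .
  have iC: "set_integrable lborel X (\<lambda>t. f t * g t * w t)" using L2_prod_int[OF wm wn f g] .
  have nf: "wnorm X w f = sqrt A" unfolding wnorm_def A_def by (simp add: power2_eq_square)
  have ng: "wnorm X w g = sqrt B" unfolding wnorm_def B_def by (simp add: power2_eq_square)
  have A0: "A \<ge> 0" unfolding A_def by (rule sint_nonneg) (simp add: wn)
  have q: "0 \<le> s^2 * A + 2 * s * C + B" for s
  proof -
    have "0 \<le> (LINT t:X|lborel. (s * f t + g t)^2 * w t)"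
      by (rule sint_nonneg) (simp add: wn)
    also have "(LINT t:X|lborel. (s * f t + g t)^2 * w t)
       = (LINT t:X|lborel. (s^2 * (f t * f t * w t) + (2 * s) * (f t * g t * w t)) + g t * g t * w t)"
      by (rule arg_cong[where f="set_lebesgue_integral lborel X"]) (auto simp: fun_eq_iff power2_eq_square algebra_simps)
    also have "\<dots> = s^2 * A + 2 * s * C + B"
      unfolding A_def B_def C_def using iA iB iC by simp
    finally show ?thesis .
  qed
  have "C^2 \<le> A * B" using quad_disc[OF q A0] .
  hence "sqrt (C^2) \<le> sqrt (A * B)" by (rule real_sqrt_le_mono)
  thus ?thesis unfolding nf ng C_def[symmetric] by (simp add: real_sqrt_mult)
qed


lemma lagrange_ex:
  fixes x :: "nat \<Rightarrow> real"
  assumes inj: "inj_on x {..N}"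
  shows "\<exists>p. degree p \<le> N \<and> (\<forall>i\<le>N. poly p (x i) = f (x i))"
proof -
  define L where "L i = (\<Prod>j\<in>{..N}-{i}. [:-x j, 1:])" for i
  define p where "p = (\<Sum>i\<le>N. smult (f (x i) / poly (L i) (x i)) (L i))"
  have degL: "degree (L i) \<le> N" if "i \<le> N" for i
  proof -
    have "degree (L i) \<le> (\<Sum>j\<in>{..N}-{i}. degree [:-x j, 1:])"
      unfolding L_def using degree_prod_sum_le[of "{..N}-{i}" "\<lambda>j. [:-x j, 1:]"] by (simp add: o_def)
    also have "\<dots> = card ({..N}-{i})" by simp
    also have "\<dots> = N" using that by simp
    finally show ?thesis .
  qed
  have "degree p \<le> N" unfolding p_def
    by (rule degree_sum_le) (auto intro: order.trans[OF degree_smult_le] degL)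
  moreover have "poly p (x k) = f (x k)" if k: "k \<le> N" for k
  proof -
    have z: "poly (L i) (x k) = 0" if "i \<le> N" "i \<noteq> k" for i
      unfolding L_def poly_prod using k that by (auto simp: prod_zero_iff)
    have nz: "poly (L k) (x k) \<noteq> 0"
      unfolding L_def poly_prod using k inj by (auto simp: prod_zero_iff inj_on_def)
    have "poly p (x k) = (\<Sum>i\<le>N. (if i = k then f (x k) else 0))"
      unfolding p_def poly_sum poly_smult
      by (rule sum.cong) (auto simp: z nz)
    also have "\<dots> = f (x k)" using k by simp
    finally show ?thesis .
  qed
  ultimately show ?thesis by blast
qed

lemma interp_unique:
  fixes x :: "nat \<Rightarrow> real"
  assumes inj: "inj_on x {..N}"
    and p: "degree p \<le> N" "\<forall>i\<le>N. poly p (x i) = f (x i)"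
    and q: "degree q \<le> N" "\<forall>i\<le>N. poly q (x i) = f (x i)"
  shows "p = q"
proof (rule poly_eqI_degree[where A="x ` {..N}"])
  have c: "card (x ` {..N}) = Suc N" using inj by (simp add: card_image)
  show "degree p < card (x ` {..N})" "degree q < card (x ` {..N})" using c p q by auto
  show "\<And>y. y \<in> x ` {..N} \<Longrightarrow> poly p y = poly q y" using p q by auto
qed

lemma interp_prop:
  fixes x :: "nat \<Rightarrow> real"
  assumes inj: "inj_on x {..N}"
  obtains p where "interp x N f = poly p" "degree p \<le> N" "\<forall>i\<le>N. poly p (x i) = f (x i)"
proof -
  have ex1: "\<exists>!p. degree p \<le> N \<and> (\<forall>i\<le>N. poly p (x i) = f (x i))"
    using lagrange_ex[OF inj] interp_unique[OF inj] by blast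
  define p where "p = (THE p. degree p \<le> N \<and> (\<forall>i\<le>N. poly p (x i) = f (x i)))"
  have "degree p \<le> N \<and> (\<forall>i\<le>N. poly p (x i) = f (x i))"
    unfolding p_def by (rule theI'[OF ex1])
  moreover have "interp x N f = poly p" unfolding interp_def p_def ..
  ultimately show ?thesis using that by blast
qed


lemma ineq6:
  fixes a b c d e f :: real
  assumes "a \<ge> 0" "b \<ge> 0" "c \<ge> 0" "d \<ge> 0" "e \<ge> 0" "f \<ge> 0"
  shows "e * b + c * f \<le> (a + b + c + d) * (e + f)"
proof -
  have "0 \<le> a*e + a*f + b*f + c*e + d*e + d*f" using assms by (simp add: add_nonneg_nonneg)
  thus ?thesis by (simp add: algebra_simps)
qed

lemma wnorm_nonneg:
  assumes wn: "\<And>t. t \<in> X \<Longrightarrow> w t \<ge> 0"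
  shows "wnorm X w f \<ge> 0"
  unfolding wnorm_def by (rule real_sqrt_ge_zero, rule sint_nonneg) (simp add: wn)

theorem mainTheorem11:
  fixes X :: "real set" and w :: "real \<Rightarrow> real" and N :: nat
    and x :: "nat \<Rightarrow> real" and wq :: "nat \<Rightarrow> real"
    and \<phi>1 \<phi>2 :: "real \<Rightarrow> real"
  assumes X_int: "is_interval X"
    and w_meas: "set_borel_measurable lborel X w"
    and w_nonneg: "\<And>t. t \<in> X \<Longrightarrow> w t \<ge> 0"
    and nodes_in: "\<And>i. i \<le> N \<Longrightarrow> x i \<in> X"
    and nodes_distinct: "inj_on x {0..N}"
    and exact: "\<And>p :: real poly. degree p \<le> 2 * N \<Longrightarrow>
                  (\<Sum>i\<le>N. wq i * poly p (x i)) = wint X w (poly p)"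
    and PN_L2: "\<And>p :: real poly. degree p \<le> N \<Longrightarrow> in_L2w X w (poly p)"
    and cont1: "continuous_on X \<phi>1" and cont2: "continuous_on X \<phi>2"
    and L2_1: "in_L2w X w \<phi>1" and L2_2: "in_L2w X w \<phi>2"
  shows "\<bar>wint X w (\<lambda>t. \<phi>1 t * \<phi>2 t) - (\<Sum>i\<le>N. wq i * (\<phi>1 (x i) * \<phi>2 (x i)))\<bar>
         \<le> (wnorm X w \<phi>1 + wnorm X w \<phi>2 + wnorm X w (interp x N \<phi>1) + wnorm X w (interp x N \<phi>2))
           * (wnorm X w (\<lambda>t. \<phi>1 t - interp x N \<phi>1 t) + wnorm X w (\<lambda>t. \<phi>2 t - interp x N \<phi>2 t))"
proof -
  have inj: "inj_on x {..N}" using nodes_distinct by (simp add: atLeast0AtMost)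
  obtain p1 where e1: "interp x N \<phi>1 = poly p1" and dp1: "degree p1 \<le> N"
    and n1: "\<forall>i\<le>N. poly p1 (x i) = \<phi>1 (x i)" using interp_prop[OF inj] by blast
  obtain p2 where e2: "interp x N \<phi>2 = poly p2" and dp2: "degree p2 \<le> N"
    and n2: "\<forall>i\<le>N. poly p2 (x i) = \<phi>2 (x i)" using interp_prop[OF inj] by blast
  have P1: "in_L2w X w (poly p1)" using PN_L2[OF dp1] .
  have P2: "in_L2w X w (poly p2)" using PN_L2[OF dp2] .
  have D1: "in_L2w X w (\<lambda>t. \<phi>1 t - poly p1 t)" using L2_diff[OF w_meas w_nonneg L2_1 P1] .
  have D2: "in_L2w X w (\<lambda>t. \<phi>2 t - poly p2 t)" using L2_diff[OF w_meas w_nonneg L2_2 P2] .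
  have "degree (p1 * p2) \<le> 2 * N" using degree_mult_le[of p1 p2] dp1 dp2 by simp
  hence "(\<Sum>i\<le>N. wq i * poly (p1 * p2) (x i)) = wint X w (poly (p1 * p2))" by (rule exact)
  moreover have "(\<Sum>i\<le>N. wq i * poly (p1 * p2) (x i)) = (\<Sum>i\<le>N. wq i * (\<phi>1 (x i) * \<phi>2 (x i)))"
    using n1 n2 by (intro sum.cong) auto
  ultimately have QN: "(\<Sum>i\<le>N. wq i * (\<phi>1 (x i) * \<phi>2 (x i)))
      = (LINT t:X|lborel. poly p1 t * poly p2 t * w t)"
    by (simp add: wint_def)
  have i12: "set_integrable lborel X (\<lambda>t. \<phi>1 t * \<phi>2 t * w t)" by (rule L2_prod_int[OF w_meas w_nonneg L2_1 L2_2])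
  have ip2: "set_integrable lborel X (\<lambda>t. poly p1 t * \<phi>2 t * w t)" by (rule L2_prod_int[OF w_meas w_nonneg P1 L2_2])
  have ipp: "set_integrable lborel X (\<lambda>t. poly p1 t * poly p2 t * w t)" by (rule L2_prod_int[OF w_meas w_nonneg P1 P2])
  have split: "wint X w (\<lambda>t. \<phi>1 t * \<phi>2 t) - (\<Sum>i\<le>N. wq i * (\<phi>1 (x i) * \<phi>2 (x i)))
     = (LINT t:X|lborel. (\<phi>1 t - poly p1 t) * \<phi>2 t * w t) + (LINT t:X|lborel. poly p1 t * (\<phi>2 t - poly p2 t) * w t)"
  proof -
    have a: "(LINT t:X|lborel. (\<phi>1 t - poly p1 t) * \<phi>2 t * w t)
        = (LINT t:X|lborel. \<phi>1 t * \<phi>2 t * w t - poly p1 t * \<phi>2 t * w t)"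
      by (simp add: algebra_simps)
    have b: "(LINT t:X|lborel. poly p1 t * (\<phi>2 t - poly p2 t) * w t)
        = (LINT t:X|lborel. poly p1 t * \<phi>2 t * w t - poly p1 t * poly p2 t * w t)"
      by (simp add: algebra_simps)
    show ?thesis unfolding QN a b set_integral_diff(2)[OF i12 ip2] set_integral_diff(2)[OF ip2 ipp]
      by (simp add: wint_def)
  qed
  have c1: "\<bar>LINT t:X|lborel. (\<phi>1 t - poly p1 t) * \<phi>2 t * w t\<bar>
      \<le> wnorm X w (\<lambda>t. \<phi>1 t - poly p1 t) * wnorm X w \<phi>2"
    by (rule CS[OF w_meas w_nonneg D1 L2_2])
  have c2: "\<bar>LINT t:X|lborel. poly p1 t * (\<phi>2 t - poly p2 t) * w t\<bar>
      \<le> wnorm X w (poly p1) * wnorm X w (\<lambda>t. \<phi>2 t - poly p2 t)"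
    by (rule CS[OF w_meas w_nonneg P1 D2])
  have "\<bar>wint X w (\<lambda>t. \<phi>1 t * \<phi>2 t) - (\<Sum>i\<le>N. wq i * (\<phi>1 (x i) * \<phi>2 (x i)))\<bar>
     \<le> wnorm X w (\<lambda>t. \<phi>1 t - poly p1 t) * wnorm X w \<phi>2 + wnorm X w (poly p1) * wnorm X w (\<lambda>t. \<phi>2 t - poly p2 t)"
    unfolding split using c1 c2 abs_triangle_ineq order.trans add_mono by fastforce
  also have "\<dots> \<le> (wnorm X w \<phi>1 + wnorm X w \<phi>2 + wnorm X w (poly p1) + wnorm X w (poly p2))
           * (wnorm X w (\<lambda>t. \<phi>1 t - poly p1 t) + wnorm X w (\<lambda>t. \<phi>2 t - poly p2 t))"
    by (intro ineq6 wnorm_nonneg w_nonneg)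
  finally show ?thesis unfolding e1 e2 .
qed

end
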